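(* For every $0<\alpha<10^{-5}$ there exists $m_0$ such that for all $m\ge m_0$ the following holds. Suppose $H$ is a $3$-graph on $V=A\cup B$ where $A,B$ are disjoint with $|A|=|B|=6m$, and every vertex of $H$ is $\alpha$-good in $H$ with respect to $\mathcal B[A,B]$. Then $H$ contains a $K_4^-$-factor.
   Context: $K_4^-$ is the $3$-graph with $4$ vertices and $3$ edges; a $K_4^-$-factor is a set of vertex-disjoint (not necessarily induced) copies covering all vertices. For disjoint $A,B$, $\mathcal B[A,B]$ is the $3$-graph on $A\cup B$ whose edges are all triples containing an odd number of vertices of $A$. For $3$-graphs $H,H'$ on the same vertex set $V$ with $|V|=n$, a vertex $v$ is $\alpha$-good in $H$ with respect to $H'$ if the number of edges of $H'$ containing $v$ that are not edges of $H$ is at most $\alpha n^2$. *)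

theory Defs
  imports Complex_Main "HOL-Library.Disjoint_Sets"
begin

definition is_3graph :: "'a set \<Rightarrow> 'a set set \<Rightarrow> bool" where
  "is_3graph V H \<longleftrightarrow> (\<forall>e\<in>H. e \<subseteq> V \<and> card e = 3)"

definition bip3 :: "'a set \<Rightarrow> 'a set \<Rightarrow> 'a set set" where
  "bip3 A B = {e. e \<subseteq> A \<union> B \<and> card e = 3 \<and> odd (card (e \<inter> A))}"

definition alpha_good :: "real \<Rightarrow> 'a set \<Rightarrow> 'a set set \<Rightarrow> 'a set set \<Rightarrow> 'a \<Rightarrow> bool" where
  "alpha_good \<alpha> V H H' v \<longleftrightarrow>
     real (card {e\<in>H'. v \<in> e \<and> e \<notin> H}) \<le> \<alpha> * (real (card V))^2"

text \<open>S spans a (not necessarily induced) copy of K4^- in H: |S| = 4 and at least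
  3 of the 3-subsets of S are edges of H (any 3 triples on 4 vertices form a K4^-).\<close>
definition K4minus_copy :: "'a set set \<Rightarrow> 'a set \<Rightarrow> bool" where
  "K4minus_copy H S \<longleftrightarrow> card S = 4 \<and> card {e\<in>H. e \<subseteq> S} \<ge> 3"

definition has_K4minus_factor :: "'a set \<Rightarrow> 'a set set \<Rightarrow> bool" where
  "has_K4minus_factor V H \<longleftrightarrow>
     (\<exists>P. partition_on V P \<and> (\<forall>S\<in>P. K4minus_copy H S))"

end

theory Submission
  imports Defs
begin


definition ptyp :: "'a set \<Rightarrow> 'a set \<Rightarrow> 'a set \<Rightarrow> bool" where
  "ptyp A B S \<longleftrightarrow> (S \<subseteq> A \<and> card S = 4) \<or> (S \<subseteq> A \<union> B \<and> card (S \<inter> A) = 1 \<and> card (S \<inter> B) = 3)"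

definition mfree :: "'a set set \<Rightarrow> 'a set \<Rightarrow> bool" where
  "mfree M S \<longleftrightarrow> (\<forall>e\<in>M. \<not> e \<subseteq> S)"

lemma card4E:
  assumes "card S = 4"
  obtains a b c d where "S = {a,b,c,d}" "a\<noteq>b" "a\<noteq>c" "a\<noteq>d" "b\<noteq>c" "b\<noteq>d" "c\<noteq>d"
proof -
  have "S \<noteq> {}" using assms by auto
  then obtain a where a: "a \<in> S" by auto
  have "finite S" using assms card.infinite by fastforce
  then have "card (S - {a}) = 3" using assms a by simp
  then obtain b c d where "S - {a} = {b,c,d}" "b\<noteq>c" "c\<noteq>d" "b\<noteq>d" by (auto simp: card_3_iff)
  then have "S = {a,b,c,d}" "a\<noteq>b" "a\<noteq>c" "a\<noteq>d" using a by auto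
  then show ?thesis using that \<open>b\<noteq>c\<close> \<open>c\<noteq>d\<close> \<open>b\<noteq>d\<close> by blast
qed

lemma lt4: "{..<4::nat} = {0,1,2,3}" by auto

lemma typ_enum:
  assumes "ptyp A B S" "A \<inter> B = {}"
  shows "\<exists>f. inj_on f {..<4::nat} \<and> f ` {..<4} = S \<and> (S \<subseteq> A \<or> (f 0 \<in> A \<and> f 1 \<in> B \<and> f 2 \<in> B \<and> f 3 \<in> B))"
  using assms(1) unfolding ptyp_def
proof
  assume h: "S \<subseteq> A \<and> card S = 4"
  then obtain a b c d where S: "S = {a,b,c,d}" "a\<noteq>b" "a\<noteq>c" "a\<noteq>d" "b\<noteq>c" "b\<noteq>d" "c\<noteq>d"
    using card4E by metis
  let ?f = "\<lambda>k::nat. if k=0 then a else if k=1 then b else if k=2 then c else d"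
  have "inj_on ?f {..<4}" using S by (auto simp: lt4 inj_on_def)
  moreover have "?f ` {..<4} = S" using S by (auto simp: lt4)
  ultimately show ?thesis using h by blast
next
  assume h: "S \<subseteq> A \<union> B \<and> card (S \<inter> A) = 1 \<and> card (S \<inter> B) = 3"
  then obtain a where a: "S \<inter> A = {a}" by (auto simp: card_1_singleton_iff)
  obtain b c d where bcd: "S \<inter> B = {b,c,d}" "b\<noteq>c" "c\<noteq>d" "b\<noteq>d" using h by (auto simp: card_3_iff)
  have S: "S = {a,b,c,d}" using a bcd h by blast
  have "a \<noteq> b" "a\<noteq>c" "a\<noteq>d" "a \<in> A" "b \<in> B" "c \<in> B" "d \<in> B" using a bcd assms(2) by auto
  let ?f = "\<lambda>k::nat. if k=0 then a else if k=1 then b else if k=2 then c else d"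
  have "inj_on ?f {..<4}" using bcd \<open>a\<noteq>b\<close> \<open>a\<noteq>c\<close> \<open>a\<noteq>d\<close> by (auto simp: lt4 inj_on_def)
  moreover have "?f ` {..<4} = S" using S by (auto simp: lt4)
  ultimately show ?thesis using \<open>a \<in> A\<close> \<open>b\<in>B\<close> \<open>c\<in>B\<close> \<open>d\<in>B\<close>
    by (intro exI[of _ ?f]) simp
qed

lemma typ_K4:
  assumes "ptyp A B S" "A \<inter> B = {}" "mfree (bip3 A B - H) S"
  shows "K4minus_copy H S"
proof -
  have inH: "t \<in> H" if "t \<subseteq> S" "t \<subseteq> A \<union> B" "card t = 3" "odd (card (t \<inter> A))" for t
    using assms(3) that unfolding mfree_def bip3_def by blast
  from assms(1) show ?thesis unfolding ptyp_def
  proof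
    assume h: "S \<subseteq> A \<and> card S = 4"
    then obtain a b c d where S: "S = {a,b,c,d}" "a\<noteq>b" "a\<noteq>c" "a\<noteq>d" "b\<noteq>c" "b\<noteq>d" "c\<noteq>d"
      using card4E by metis
    have A: "a \<in> A" "b \<in> A" "c \<in> A" "d \<in> A" using h S by auto
    have "{a,b,c} \<in> H" by (rule inH) (use S A in auto)
    moreover have "{a,b,d} \<in> H" by (rule inH) (use S A in auto)
    moreover have "{a,c,d} \<in> H" by (rule inH) (use S A in auto)
    ultimately have sub: "{{a,b,c},{a,b,d},{a,c,d}} \<subseteq> {e\<in>H. e \<subseteq> S}" using S by auto
    have c3: "card {{a,b,c},{a,b,d},{a,c,d}} = 3" using S by (auto simp: doubleton_eq_iff insert_eq_iff)
    have "finite {e\<in>H. e \<subseteq> S}" using S by (rule_tac finite_subset[of _ "Pow S"]) auto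
    then have "3 \<le> card {e\<in>H. e \<subseteq> S}" using card_mono[OF _ sub] c3 by simp
    then show ?thesis using h unfolding K4minus_copy_def by simp
  next
    assume h: "S \<subseteq> A \<union> B \<and> card (S \<inter> A) = 1 \<and> card (S \<inter> B) = 3"
    then obtain a where a: "S \<inter> A = {a}" by (auto simp: card_1_singleton_iff)
    obtain b c d where bcd: "S \<inter> B = {b,c,d}" "b\<noteq>c" "c\<noteq>d" "b\<noteq>d" using h by (auto simp: card_3_iff)
    have S: "S = {a,b,c,d}" using a bcd h by blast
    have X: "a \<noteq> b" "a\<noteq>c" "a\<noteq>d" "a \<in> A" "b \<in> B" "c \<in> B" "d \<in> B" "b \<notin> A" "c \<notin> A" "d \<notin> A"
      using a bcd assms(2) by auto
    have "{a,b,c} \<in> H" by (rule inH) (use S X bcd in auto)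
    moreover have "{a,b,d} \<in> H" by (rule inH) (use S X bcd in auto)
    moreover have "{a,c,d} \<in> H" by (rule inH) (use S X bcd in auto)
    ultimately have sub: "{{a,b,c},{a,b,d},{a,c,d}} \<subseteq> {e\<in>H. e \<subseteq> S}" using S by auto
    have c3: "card {{a,b,c},{a,b,d},{a,c,d}} = 3" using X bcd by (auto simp: doubleton_eq_iff insert_eq_iff)
    have "finite {e\<in>H. e \<subseteq> S}" using S by (rule_tac finite_subset[of _ "Pow S"]) auto
    then have "3 \<le> card {e\<in>H. e \<subseteq> S}" using card_mono[OF _ sub] c3 by simp
    moreover have "card S = 4" using S X bcd by auto
    ultimately show ?thesis unfolding K4minus_copy_def by simp
  qed
qed



lemma init_part_aux:
  assumes "A0 \<inter> B0 = {}"
  shows "\<And>A B p. finite A \<Longrightarrow> finite B \<Longrightarrow> A \<subseteq> A0 \<Longrightarrow> B \<subseteq> B0 \<Longrightarrow> card A = 4*p + q \<Longrightarrow> card B = 3*q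
     \<Longrightarrow> \<exists>P. partition_on (A\<union>B) P \<and> (\<forall>S\<in>P. ptyp A0 B0 S)"
proof (induction q)
  case 0
  then show ?case
  proof (induction p arbitrary: A)
    case 0
    then show ?case by (auto simp: partition_on_empty)
  next
    case (Suc p)
    have "4 \<le> card A" using Suc.prems(5) by simp
    then obtain X where X: "X \<subseteq> A" "card X = 4" "finite X" by (rule obtain_subset_with_card_n)
    have "card (A - X) = 4*p + 0" using Suc.prems(1,5) X by (simp add: card_Diff_subset)
    moreover have "finite (A - X)" "A - X \<subseteq> A0" using Suc.prems(1,3) by auto
    ultimately obtain P where P: "partition_on ((A - X) \<union> B) P" "\<forall>S\<in>P. ptyp A0 B0 S"
      using Suc.IH[OF _ Suc.prems(2) _ Suc.prems(4) _ Suc.prems(6)] by blast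
    have "B = {}" using Suc.prems by auto
    have "disjnt X (\<Union>P)" using P(1) \<open>B = {}\<close> unfolding partition_on_def disjnt_def by auto
    moreover have "partition_on (A \<union> B) (insert X P)"
    proof -
      have "A \<union> B - X = (A - X) \<union> B" using \<open>B = {}\<close> by auto
      moreover have "X \<noteq> {}" using X by auto
      ultimately show ?thesis using P(1) X(1) \<open>disjnt X (\<Union>P)\<close> partition_on_insert by fastforce
    qed
    moreover have "ptyp A0 B0 X" using X Suc.prems unfolding ptyp_def by auto
    ultimately show ?case using P(2) by blast
  qed
next
  case (Suc q)
  have "card A \<ge> 1" using Suc.prems by simp
  then obtain a where a: "a \<in> A" by fastforce
  have "card B \<ge> 3" using Suc.prems by simp
  then obtain Y where Y: "Y \<subseteq> B" "card Y = 3" "finite Y" by (rule obtain_subset_with_card_n)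
  have c1: "card (A - {a}) = 4*p + q" using Suc.prems(1,5) a by (simp add: card_Diff_singleton)
  have c2: "card (B - Y) = 3*q" using Suc.prems(2,6) Y by (simp add: card_Diff_subset)
  have f1: "finite (A - {a})" "finite (B - Y)" "A - {a} \<subseteq> A0" "B - Y \<subseteq> B0" using Suc.prems(1-4) by auto
  obtain P where P: "partition_on ((A - {a}) \<union> (B - Y)) P" "\<forall>S\<in>P. ptyp A0 B0 S"
    using Suc.IH[OF f1 c1 c2] by blast
  let ?X = "insert a Y"
  have aY: "a \<notin> Y" using a Y Suc.prems assms by auto
  have "disjnt ?X (\<Union>P)" using P(1) Suc.prems(3,4) assms a Y unfolding partition_on_def disjnt_def by auto
  moreover have "partition_on (A \<union> B) (insert ?X P)"
  proof -
    have "A \<union> B - ?X = (A - {a}) \<union> (B - Y)" using Suc.prems assms a Y by auto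
    moreover have "?X \<subseteq> A \<union> B" using a Y by auto
    ultimately show ?thesis using P(1) partition_on_insert[OF \<open>disjnt ?X (\<Union>P)\<close>] by simp
  qed
  moreover have "ptyp A0 B0 ?X"
  proof -
    have "?X \<inter> A0 = {a}" using a Y Suc.prems assms by auto
    moreover have "?X \<inter> B0 = Y" using a Y Suc.prems assms by auto
    ultimately show ?thesis using Y a Suc.prems unfolding ptyp_def by auto
  qed
  ultimately show ?case using P(2) by blast
qed



definition nocross :: "'a set set \<Rightarrow> (nat \<Rightarrow> 'a set) \<Rightarrow> bool" where
  "nocross M Bk \<longleftrightarrow> (\<forall>e\<in>M.
     \<not>(e \<inter> Bk 0 \<noteq> {} \<and> e \<inter> Bk 1 \<noteq> {} \<and> e \<inter> Bk 2 \<noteq> {}) \<and>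
     \<not>(e \<inter> Bk 0 \<noteq> {} \<and> e \<inter> Bk 1 \<noteq> {} \<and> e \<inter> Bk 3 \<noteq> {}) \<and>
     \<not>(e \<inter> Bk 0 \<noteq> {} \<and> e \<inter> Bk 2 \<noteq> {} \<and> e \<inter> Bk 3 \<noteq> {}) \<and>
     \<not>(e \<inter> Bk 1 \<noteq> {} \<and> e \<inter> Bk 2 \<noteq> {} \<and> e \<inter> Bk 3 \<noteq> {}))"

lemma three_of_four:
  fixes a b c :: nat
  assumes "a<4" "b<4" "c<4" "a\<noteq>b" "a\<noteq>c" "b\<noteq>c" "Q a" "Q b" "Q c"
  shows "(Q 0 \<and> Q 1 \<and> Q 2) \<or> (Q 0 \<and> Q 1 \<and> Q 3) \<or> (Q 0 \<and> Q 2 \<and> Q 3) \<or> (Q 1 \<and> Q 2 \<and> Q 3)"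
proof -
  have "a \<in> {0,1,2,3}" "b \<in> {0,1,2,3}" "c \<in> {0,1,2,3}" using assms(1-3) lt4 by blast+
  then show ?thesis using assms(4-9) by auto
qed

lemma mod4_cancel:
  fixes j j' k :: nat
  assumes "j < 4" "j' < 4" "(j + k) mod 4 = (j' + k) mod 4"
  shows "j = j'"
  using assms by presburger

lemma mod4_cancel2:
  fixes j k k' :: nat
  assumes "k < 4" "k' < 4" "(j + k) mod 4 = (j + k') mod 4"
  shows "k = k'"
  using assms by presburger



lemma rearrange:
  assumes AB: "A \<inter> B = {}" "finite A" "finite B"
  and P: "partition_on (A \<union> B) P" "\<forall>S\<in>P. ptyp A B S"
  and Bk: "\<forall>i<4. Bk i \<in> P" "\<forall>i<4. \<forall>j<4. i\<noteq>j \<longrightarrow> Bk i \<noteq> Bk j" "\<forall>i<4. (Bk i \<subseteq> A \<longleftrightarrow> Bk 0 \<subseteq> A)"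
  and nc: "nocross M Bk" and M3: "\<forall>e\<in>M. card e = 3" and nf: "\<not> mfree M (Bk 0)"
  shows "\<exists>P'. partition_on (A\<union>B) P' \<and> (\<forall>S\<in>P'. ptyp A B S) \<and> card {S\<in>P. mfree M S} < card {S\<in>P'. mfree M S}"
proof -
  have dP: "disjoint P" using P(1) by (rule partition_onD2)
  have disj: "Bk i \<inter> Bk j = {}" if "i<4" "j<4" "i\<noteq>j" for i j
  proof -
    have "Bk i \<in> P" "Bk j \<in> P" "Bk i \<noteq> Bk j" using that Bk(1,2) by auto
    then show ?thesis using dP by (simp add: disjointD)
  qed
  have "\<forall>i\<in>{..<4::nat}. \<exists>f. inj_on f {..<4::nat} \<and> f ` {..<4} = Bk i \<and> (Bk i \<subseteq> A \<or> (f 0 \<in> A \<and> f 1 \<in> B \<and> f 2 \<in> B \<and> f 3 \<in> B))"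
  proof
    fix i :: nat assume "i \<in> {..<4}"
    then have "ptyp A B (Bk i)" using Bk(1) P(2) by simp
    then show "\<exists>f. inj_on f {..<4::nat} \<and> f ` {..<4} = Bk i \<and> (Bk i \<subseteq> A \<or> (f 0 \<in> A \<and> f 1 \<in> B \<and> f 2 \<in> B \<and> f 3 \<in> B))"
      by (rule typ_enum[OF _ AB(1)])
  qed
  from bchoice[OF this] obtain F where F: "\<forall>i\<in>{..<4::nat}. inj_on (F i) {..<4::nat} \<and> F i ` {..<4} = Bk i \<and> (Bk i \<subseteq> A \<or> (F i 0 \<in> A \<and> F i 1 \<in> B \<and> F i 2 \<in> B \<and> F i 3 \<in> B))"
    by blast
  have FinB: "F i k \<in> Bk i" if "i<4" "k<4" for i k using F that by blast
  have grid: "i = i' \<and> k = k'" if "i<4" "k<4" "i'<4" "k'<4" "F i k = F i' k'" for i k i' k'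
  proof -
    have "i = i'" using FinB[of i k] FinB[of i' k'] disj[of i i'] that by auto
    moreover then have "k = k'" using F that inj_onD[of "F i" "{..<4}" k k'] by auto
    ultimately show ?thesis by simp
  qed
  define G where "G j k = F ((j+k) mod 4) k" for j k :: nat
  define N where "N j = G j ` {..<4}" for j
  have Ginj: "inj_on (G j) {..<4}" for j
  proof (rule inj_onI)
    fix x y assume xy: "x \<in> {..<4::nat}" "y \<in> {..<4::nat}" "G j x = G j y"
    from xy(3) have eq: "F ((j+x) mod 4) x = F ((j+y) mod 4) y" by (simp add: G_def)
    have "(j+x) mod 4 = (j+y) mod 4 \<and> x = y" by (rule grid[OF _ _ _ _ eq]) (use xy in simp_all)
    then show "x = y" by simp
  qed
  have Nsub: "N j \<subseteq> \<Union> (Bk ` {..<4})" for j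
  proof
    fix x assume "x \<in> N j"
    then obtain k where k: "k<4" "x = G j k" unfolding N_def by auto
    have "(j+k) mod 4 < 4" by simp
    then have "x \<in> Bk ((j+k) mod 4)" using FinB k unfolding G_def by simp
    then show "x \<in> \<Union> (Bk ` {..<4})" using \<open>(j+k) mod 4 < 4\<close> by blast
  qed
  have Bsub: "Bk i \<subseteq> \<Union> (N ` {..<4})" if "i<4" for i
  proof
    fix x assume "x \<in> Bk i"
    moreover have "Bk i = F i ` {..<4}" using F that by simp
    ultimately obtain k where k: "k < 4" "x = F i k" by auto
    define j where "j = (i + 4 - k) mod 4"
    have "i \<in> {0,1,2,3}" "k \<in> {0,1,2,3}" using that k(1) lt4 by blast+
    then have "(j + k) mod 4 = i" unfolding j_def by auto
    then have "x = G j k" unfolding G_def using k by simp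
    moreover have "j < 4" unfolding j_def by simp
    ultimately show "x \<in> \<Union> (N ` {..<4})" unfolding N_def using k(1) by blast
  qed
  have UN: "\<Union> (N ` {..<4}) = \<Union> (Bk ` {..<4})" using Nsub Bsub by blast
  have Ndisj: "N j \<inter> N j' = {}" if "j<4" "j'<4" "j\<noteq>j'" for j j'
  proof (rule ccontr)
    assume "N j \<inter> N j' \<noteq> {}"
    then obtain k k' where kk: "k<4" "k'<4" "G j k = G j' k'" unfolding N_def by auto
    from kk(3) have eq: "F ((j+k) mod 4) k = F ((j'+k') mod 4) k'" by (simp add: G_def)
    have "(j+k) mod 4 = (j'+k') mod 4 \<and> k = k'" by (rule grid[OF _ _ _ _ eq]) (use kk in simp_all)
    then show False using mod4_cancel that by blast
  qed
  have Nne: "N j \<noteq> {}" for j unfolding N_def by (simp add: lt4)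
  have Ncard: "card (N j) = 4" for j unfolding N_def using Ginj card_image by fastforce
  have BkV: "Bk i \<subseteq> A \<union> B" if "i<4" for i using Bk(1) P(1) that unfolding partition_on_def by blast
  have Ntyp: "ptyp A B (N j)" if "j<4" for j
  proof (cases "Bk 0 \<subseteq> A")
    case True
    then have "N j \<subseteq> A" using Nsub Bk(3) by blast
    then show ?thesis using Ncard unfolding ptyp_def by simp
  next
    case False
    then have nA: "\<not> Bk i \<subseteq> A" if "i<4" for i using Bk(3) that by blast
    have FA: "F i 0 \<in> A" "F i 1 \<in> B" "F i 2 \<in> B" "F i 3 \<in> B" if "i<4" for i
      using F nA that by blast+
    have G0: "G j 0 \<in> A" using FA that unfolding G_def by simp
    have Gk: "G j k \<in> B" if "k \<in> {1,2,3}" for k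
    proof -
      have "(j+k) mod 4 < 4" by simp
      then show ?thesis using FA[of "(j+k) mod 4"] that unfolding G_def by auto
    qed
    have N4: "N j = insert (G j 0) (G j ` {1,2,3})" unfolding N_def lt4 by auto
    have "N j \<inter> A = {G j 0}" using N4 G0 Gk AB(1) by auto
    moreover have "N j \<inter> B = G j ` {1,2,3}" using N4 G0 Gk AB(1) by auto
    moreover have "card (G j ` {1,2,3}) = 3"
    proof -
      have "inj_on (G j) {1,2,3}" using Ginj by (rule inj_on_subset) (auto simp: lt4)
      then show ?thesis by (simp add: card_image)
    qed
    moreover have "N j \<subseteq> A \<union> B" using Nsub BkV by blast
    ultimately show ?thesis unfolding ptyp_def by simp
  qed
  have Nfree: "mfree M (N j)" if "j<4" for j
    unfolding mfree_def
  proof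
    fix e assume e: "e \<in> M"
    show "\<not> e \<subseteq> N j"
    proof
      assume sub: "e \<subseteq> N j"
      obtain x y z where xyz: "e = {x,y,z}" "x\<noteq>y" "y\<noteq>z" "x\<noteq>z" using M3 e by (auto simp: card_3_iff)
      obtain kx where kx: "kx<4" "x = G j kx" using sub xyz unfolding N_def by auto
      obtain ky where ky: "ky<4" "y = G j ky" using sub xyz unfolding N_def by auto
      obtain kz where kz: "kz<4" "z = G j kz" using sub xyz unfolding N_def by auto
      have d: "kx \<noteq> ky" "ky \<noteq> kz" "kx \<noteq> kz" using xyz kx ky kz by auto
      have d2: "(j+kx) mod 4 \<noteq> (j+ky) mod 4" "(j+kx) mod 4 \<noteq> (j+kz) mod 4" "(j+ky) mod 4 \<noteq> (j+kz) mod 4"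
        using d mod4_cancel2 kx ky kz by blast+
      have m: "e \<inter> Bk ((j+kx) mod 4) \<noteq> {}" "e \<inter> Bk ((j+ky) mod 4) \<noteq> {}" "e \<inter> Bk ((j+kz) mod 4) \<noteq> {}"
        using FinB kx ky kz xyz unfolding G_def by auto
      have disj3: "(e \<inter> Bk 0 \<noteq> {} \<and> e \<inter> Bk 1 \<noteq> {} \<and> e \<inter> Bk 2 \<noteq> {}) \<or>
            (e \<inter> Bk 0 \<noteq> {} \<and> e \<inter> Bk 1 \<noteq> {} \<and> e \<inter> Bk 3 \<noteq> {}) \<or>
            (e \<inter> Bk 0 \<noteq> {} \<and> e \<inter> Bk 2 \<noteq> {} \<and> e \<inter> Bk 3 \<noteq> {}) \<or>
            (e \<inter> Bk 1 \<noteq> {} \<and> e \<inter> Bk 2 \<noteq> {} \<and> e \<inter> Bk 3 \<noteq> {})"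
        by (rule three_of_four[where Q="\<lambda>i. e \<inter> Bk i \<noteq> {}" and a="(j+kx) mod 4" and b="(j+ky) mod 4" and c="(j+kz) mod 4"]) (use d2 m in auto)
      have nce: "\<not>(e \<inter> Bk 0 \<noteq> {} \<and> e \<inter> Bk 1 \<noteq> {} \<and> e \<inter> Bk 2 \<noteq> {}) \<and>
     \<not>(e \<inter> Bk 0 \<noteq> {} \<and> e \<inter> Bk 1 \<noteq> {} \<and> e \<inter> Bk 3 \<noteq> {}) \<and>
     \<not>(e \<inter> Bk 0 \<noteq> {} \<and> e \<inter> Bk 2 \<noteq> {} \<and> e \<inter> Bk 3 \<noteq> {}) \<and>
     \<not>(e \<inter> Bk 1 \<noteq> {} \<and> e \<inter> Bk 2 \<noteq> {} \<and> e \<inter> Bk 3 \<noteq> {})"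
        using bspec[OF nc[unfolded nocross_def] e] .
      then show False using disj3 by blast
    qed
  qed
  define Bs where "Bs = Bk ` {..<4}"
  have BsP: "Bs \<subseteq> P" unfolding Bs_def using Bk(1) by auto
  have other: "T \<inter> Bk i = {}" if "T \<in> P - Bs" "i<4" for T i
  proof -
    have "T \<in> P" "Bk i \<in> P" "T \<noteq> Bk i" using that Bk(1) unfolding Bs_def by auto
    then show ?thesis using dP by (simp add: disjointD)
  qed
  have otherN: "T \<inter> N j = {}" if "T \<in> P - Bs" for T j
    using other[OF that] Nsub by blast
  define P' where "P' = (P - Bs) \<union> N ` {..<4}"
  have part': "partition_on (A \<union> B) P'"
  proof (rule partition_onI)
    have "\<Union>P = A \<union> B" using P(1) unfolding partition_on_def by simp
    have "\<Union> P' = \<Union>(P - Bs) \<union> \<Union>(N ` {..<4})" unfolding P'_def by (rule Union_Un_distrib)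
    also have "\<dots> = \<Union>(P - Bs) \<union> \<Union> Bs" using UN unfolding Bs_def by simp
    also have "\<dots> = \<Union>((P - Bs) \<union> Bs)" by (rule Union_Un_distrib[symmetric])
    also have "(P - Bs) \<union> Bs = P" using BsP by blast
    finally show "\<Union> P' = A \<union> B" using \<open>\<Union>P = A \<union> B\<close> by simp
  next
    fix p q assume pq: "p \<in> P'" "q \<in> P'" "p \<noteq> q"
    show "disjnt p q"
    proof (cases "p \<in> P - Bs")
      case True
      show ?thesis
      proof (cases "q \<in> P - Bs")
        case True
        then show ?thesis using \<open>p \<in> P - Bs\<close> pq(3) dP unfolding disjoint_def disjnt_def by blast
      next
        case False
        then obtain j where "q = N j" using pq(2) unfolding P'_def by auto
        then show ?thesis using otherN[OF \<open>p \<in> P - Bs\<close>] unfolding disjnt_def by simp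
      qed
    next
      case False
      then obtain j where j: "j<4" "p = N j" using pq(1) unfolding P'_def by auto
      show ?thesis
      proof (cases "q \<in> P - Bs")
        case True
        then show ?thesis using otherN[OF True] j unfolding disjnt_def by auto
      next
        case False
        then obtain j' where j': "j'<4" "q = N j'" using pq(2) unfolding P'_def by auto
        then show ?thesis using Ndisj[of j j'] j pq(3) unfolding disjnt_def by auto
      qed
    qed
  next
    show "{} \<notin> P'" using P(1) Nne unfolding P'_def partition_on_def by auto
  qed
  have typ': "\<forall>S\<in>P'. ptyp A B S" using P(2) Ntyp unfolding P'_def by auto
  have finP: "finite P" using P(1) AB(2,3) finite_elements by blast
  define Rr where "Rr = {S \<in> P - Bs. mfree M S}"
  have finRr: "finite Rr" unfolding Rr_def using finP by simp
  have F0: "{S\<in>P. mfree M S} \<subseteq> Rr \<union> Bk ` {1,2,3}"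
  proof
    fix S assume S: "S \<in> {S\<in>P. mfree M S}"
    show "S \<in> Rr \<union> Bk ` {1,2,3}"
    proof (cases "S \<in> Bs")
      case True
      then obtain i where i: "i < 4" "S = Bk i" unfolding Bs_def by auto
      have "i \<noteq> 0"
      proof
        assume "i = 0"
        then have "mfree M (Bk 0)" using S i by simp
        then show False using nf by simp
      qed
      moreover have "i \<in> {0,1,2,3}" using i(1) lt4 by blast
      ultimately have "i \<in> {1,2,3}" by simp
      then show ?thesis using i by auto
    next
      case False
      then show ?thesis using S unfolding Rr_def by auto
    qed
  qed
  have c0: "card {S\<in>P. mfree M S} \<le> card Rr + 3"
  proof -
    have "card {S\<in>P. mfree M S} \<le> card (Rr \<union> Bk ` {1,2,3})"
      by (rule card_mono) (use finRr F0 in auto)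
    also have "\<dots> \<le> card Rr + card (Bk ` {1,2,3::nat})" by (rule card_Un_le)
    also have "card (Bk ` {1,2,3::nat}) \<le> 3" using card_image_le[of "{1,2,3::nat}" Bk] by simp
    finally show ?thesis by simp
  qed
  have injN: "inj_on N {..<4}"
  proof (rule inj_onI)
    fix j j' assume "j \<in> {..<4::nat}" "j' \<in> {..<4::nat}" "N j = N j'"
    then show "j = j'" using Ndisj[of j j'] Nne[of j] by auto
  qed
  have cN: "card (N ` {..<4}) = 4" using card_image[OF injN] by simp
  have dRN: "Rr \<inter> N ` {..<4} = {}"
  proof -
    have "T \<noteq> N j" if "T \<in> Rr" for T j using otherN[of T j] Nne[of j] that unfolding Rr_def by auto
    then show ?thesis by auto
  qed
  have sub1: "Rr \<union> N ` {..<4} \<subseteq> {S\<in>P'. mfree M S}"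
    unfolding Rr_def P'_def using Nfree by auto
  have finP': "finite P'" unfolding P'_def using finP by simp
  have "card (Rr \<union> N ` {..<4}) = card Rr + 4"
    using card_Un_disjoint[OF finRr _ dRN] cN by simp
  moreover have "card (Rr \<union> N ` {..<4}) \<le> card {S\<in>P'. mfree M S}"
    by (rule card_mono) (use finP' sub1 in auto)
  ultimately have "card Rr + 4 \<le> card {S\<in>P'. mfree M S}" by simp
  then show ?thesis using c0 part' typ' by (intro exI[of _ P']) simp
qed



definition pd :: "'a set set \<Rightarrow> 'a \<Rightarrow> 'a \<Rightarrow> nat" where
  "pd M x y = card {e\<in>M. x \<in> e \<and> y \<in> e}"

definition W :: "'a set set \<Rightarrow> 'a set \<Rightarrow> 'a set \<Rightarrow> nat" where
  "W M X T = (\<Sum>y\<in>T. \<Sum>x\<in>X. pd M x y)"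

lemma sum_pd:
  assumes "finite M" "\<forall>e\<in>M. card e = 3" "finite V"
  shows "(\<Sum>y\<in>V. pd M x y) \<le> 3 * card {e\<in>M. x \<in> e}"
proof -
  let ?Mx = "{e\<in>M. x \<in> e}"
  have fMx: "finite ?Mx" using assms(1) by simp
  have "pd M x y = (\<Sum>e\<in>?Mx. if y \<in> e then 1 else 0)" for y
  proof -
    have "{e\<in>M. x \<in> e \<and> y \<in> e} = {e\<in>?Mx. y \<in> e}" by auto
    then have "pd M x y = card {e\<in>?Mx. y \<in> e}" unfolding pd_def by simp
    also have "\<dots> = (\<Sum>e\<in>{e\<in>?Mx. y \<in> e}. 1)" by simp
    also have "\<dots> = (\<Sum>e\<in>?Mx. if y \<in> e then 1 else 0)" by (rule sum.inter_filter[OF fMx])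
    finally show ?thesis .
  qed
  then have "(\<Sum>y\<in>V. pd M x y) = (\<Sum>y\<in>V. \<Sum>e\<in>?Mx. if y \<in> e then 1 else 0)" by simp
  also have "\<dots> = (\<Sum>e\<in>?Mx. \<Sum>y\<in>V. if y \<in> e then 1 else 0)" by (rule sum.swap)
  also have "\<dots> \<le> (\<Sum>e\<in>?Mx. (3::nat))"
  proof (rule sum_mono)
    fix e assume e: "e \<in> ?Mx"
    have fe: "finite e" using assms(2) e by (metis (no_types, lifting) card.infinite mem_Collect_eq zero_neq_numeral)
    have "(\<Sum>y\<in>V. if y \<in> e then 1 else 0) = (\<Sum>y\<in>{y\<in>V. y \<in> e}. (1::nat))"
      by (rule sum.inter_filter[OF assms(3), symmetric])
    also have "\<dots> = card {y\<in>V. y \<in> e}" by simp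
    also have "\<dots> \<le> card e" by (rule card_mono[OF fe]) auto
    also have "\<dots> = 3" using assms(2) e by simp
    finally show "(\<Sum>y\<in>V. if y \<in> e then 1 else 0) \<le> (3::nat)" .
  qed
  also have "\<dots> = 3 * card ?Mx" by simp
  finally show ?thesis .
qed

lemma Wsum:
  assumes "partition_on V P" "finite V" "C \<subseteq> P" "finite X"
  shows "(\<Sum>T\<in>C. W M X T) \<le> (\<Sum>y\<in>V. \<Sum>x\<in>X. pd M x y)"
proof -
  let ?g = "\<lambda>y. \<Sum>x\<in>X. pd M x y"
  have fin: "\<forall>T\<in>C. finite T" using assms(1-3) unfolding partition_on_def
    by (meson Union_upper finite_subset subset_iff)
  have dj: "\<forall>S\<in>C. \<forall>T\<in>C. S \<noteq> T \<longrightarrow> S \<inter> T = {}" using assms(1,3) partition_onD2 disjointD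
    by (metis subsetD)
  have "(\<Sum>T\<in>C. W M X T) = sum ?g (\<Union>C)" unfolding W_def using sum.Union_disjoint[OF fin dj, of ?g] by simp
  also have "\<dots> \<le> sum ?g V"
  proof (rule sum_mono2[OF assms(2)])
    show "\<Union>C \<subseteq> V" using assms(1,3) unfolding partition_on_def by auto
  qed auto
  finally show ?thesis .
qed

lemma Wsum_real:
  assumes "partition_on V P" "finite V" "C \<subseteq> P" "finite X" "X \<subseteq> V"
    and "finite M" "\<forall>e\<in>M. card e = 3" "\<forall>v\<in>V. real (card {e\<in>M. v \<in> e}) \<le> D"
  shows "real (\<Sum>T\<in>C. W M X T) \<le> 3 * real (card X) * D"
proof -
  have "(\<Sum>T\<in>C. W M X T) \<le> (\<Sum>y\<in>V. \<Sum>x\<in>X. pd M x y)" by (rule Wsum[OF assms(1-4)])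
  also have "\<dots> = (\<Sum>x\<in>X. \<Sum>y\<in>V. pd M x y)" by (rule sum.swap)
  also have "\<dots> \<le> (\<Sum>x\<in>X. 3 * card {e\<in>M. x \<in> e})"
    by (rule sum_mono) (rule sum_pd[OF assms(6,7,2)])
  finally have "real (\<Sum>T\<in>C. W M X T) \<le> real (\<Sum>x\<in>X. 3 * card {e\<in>M. x \<in> e})" by linarith
  also have "\<dots> = (\<Sum>x\<in>X. 3 * real (card {e\<in>M. x \<in> e}))" by simp
  also have "\<dots> \<le> (\<Sum>x\<in>X. 3 * D)"
    by (rule sum_mono) (use assms(5,8) in auto)
  also have "\<dots> = 3 * real (card X) * D" by simp
  finally show ?thesis .
qed

lemma markov:
  assumes "finite C" "c > 0"
  shows "real (card {T\<in>C. c < real (f T)}) * c \<le> real (\<Sum>T\<in>C. f T)"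
proof -
  let ?S = "{T\<in>C. c < real (f T)}"
  have "real (card ?S) * c = (\<Sum>T\<in>?S. c)" by simp
  also have "\<dots> \<le> (\<Sum>T\<in>?S. real (f T))" by (rule sum_mono) auto
  also have "\<dots> \<le> (\<Sum>T\<in>C. real (f T))" by (rule sum_mono2[OF assms(1)]) auto
  also have "\<dots> = real (\<Sum>T\<in>C. f T)" by simp
  finally show ?thesis .
qed



lemma badcount:
  assumes dP: "disjoint P" and C: "C \<subseteq> P" "finite C"
    and dT: "\<forall>T\<in>C. T \<inter> X = {} \<and> T \<inter> Y = {}" and XY: "X \<inter> Y = {}" "finite X" "finite Y"
    and M: "finite M" "\<forall>e\<in>M. card e = 3"
  shows "card {T\<in>C. \<exists>e\<in>M. e \<inter> X \<noteq> {} \<and> e \<inter> Y \<noteq> {} \<and> e \<inter> T \<noteq> {}} \<le> W M X Y"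
proof -
  let ?Bad = "{T\<in>C. \<exists>e\<in>M. e \<inter> X \<noteq> {} \<and> e \<inter> Y \<noteq> {} \<and> e \<inter> T \<noteq> {}}"
  let ?Tg = "SIGMA y:Y. SIGMA x:X. {e\<in>M. x \<in> e \<and> y \<in> e}"
  have finTg: "finite ?Tg" using XY(2,3) M(1) by auto
  have cTg: "card ?Tg = W M X Y"
    unfolding W_def pd_def using XY(2,3) M(1) by (simp add: card_SigmaI)
  have "\<forall>T\<in>?Bad. \<exists>w. w \<in> ?Tg \<and> (snd (snd w)) \<inter> T \<noteq> {}"
  proof
    fix T assume "T \<in> ?Bad"
    then obtain e x y where "e \<in> M" "x \<in> e \<inter> X" "y \<in> e \<inter> Y" "e \<inter> T \<noteq> {}" by blast
    then have "(y, x, e) \<in> ?Tg" by auto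
    then show "\<exists>w. w \<in> ?Tg \<and> (snd (snd w)) \<inter> T \<noteq> {}" using \<open>e \<inter> T \<noteq> {}\<close> by (intro exI[of _ "(y,x,e)"]) auto
  qed
  from bchoice[OF this] obtain h where h: "\<forall>T\<in>?Bad. h T \<in> ?Tg \<and> snd (snd (h T)) \<inter> T \<noteq> {}" by blast
  have "inj_on h ?Bad"
  proof (rule inj_onI)
    fix T1 T2 assume T: "T1 \<in> ?Bad" "T2 \<in> ?Bad" "h T1 = h T2"
    obtain y x e where w: "h T1 = (y, x, e)" by (cases "h T1") auto
    have w2: "h T2 = (y,x,e)" using w T(3) by simp
    have h1: "h T1 \<in> ?Tg" "snd (snd (h T1)) \<inter> T1 \<noteq> {}" using h T(1) by blast+
    have h2: "snd (snd (h T2)) \<inter> T2 \<noteq> {}" using h T(2) by blast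
    have ye: "y \<in> Y" "x \<in> X" "e \<in> M" "x \<in> e" "y \<in> e" using h1(1) w by auto
    have "e \<inter> T1 \<noteq> {}" using h1(2) w by simp
    then obtain z1 where z1: "z1 \<in> e" "z1 \<in> T1" by blast
    have "e \<inter> T2 \<noteq> {}" using h2 w2 by simp
    then obtain z2 where z2: "z2 \<in> e" "z2 \<in> T2" by blast
    show "T1 = T2"
    proof (rule ccontr)
      assume ne: "T1 \<noteq> T2"
      have "T1 \<in> P" "T2 \<in> P" using T(1,2) C(1) by auto
      then have "T1 \<inter> T2 = {}" using dP ne disjointD by blast
      then have "z1 \<noteq> z2" using z1 z2 by auto
      moreover have "z1 \<noteq> x" "z1 \<noteq> y" "z2 \<noteq> x" "z2 \<noteq> y" using dT T(1,2) z1 z2 ye by blast+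
      moreover have "x \<noteq> y" using XY(1) ye by auto
      ultimately have "card {x,y,z1,z2} = 4" by auto
      moreover have "{x,y,z1,z2} \<subseteq> e" using ye z1 z2 by auto
      moreover have "finite e" using M(2) ye(3) by (metis card.infinite zero_neq_numeral)
      ultimately have "4 \<le> card e" by (metis card_mono)
      then show False using M(2) ye(3) by simp
    qed
  qed
  moreover have "h ` ?Bad \<subseteq> ?Tg" using h by blast
  ultimately have "card ?Bad \<le> card ?Tg" using card_inj_on_le finTg by blast
  then show ?thesis using cTg by simp
qed

lemma exists_avoid:
  assumes "finite C" "S1 \<subseteq> C" "S2 \<subseteq> C" "real (card S1) + real (card S2) < real (card C)"
  shows "\<exists>T\<in>C. T \<notin> S1 \<and> T \<notin> S2"
proof (rule ccontr)
  assume "\<not> ?thesis"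
  then have "C \<subseteq> S1 \<union> S2" by blast
  moreover have "finite (S1 \<union> S2)" using assms(1-3) finite_subset by blast
  ultimately have "card C \<le> card (S1 \<union> S2)" using card_mono by blast
  also have "\<dots> \<le> card S1 + card S2" by (rule card_Un_le)
  finally show False using assms(4) by linarith
qed



lemma div_helper:
  fixes x mr a k :: real
  assumes "x * (mr / k) \<le> a * mr^2" "mr > 0" "k > 0"
  shows "x \<le> a * k * mr"
proof -
  have "x * mr \<le> (a * k * mr) * mr" using assms by (simp add: field_simps power2_eq_square)
  then show ?thesis using assms(2) by (simp add: mult_le_cancel_right_pos)
qed

lemma choose_blocks:
  fixes m :: nat and D :: real
  assumes P: "partition_on V P" "finite V"
    and M: "finite M" "\<forall>e\<in>M. card e = 3"
    and deg: "\<forall>v\<in>V. real (card {e\<in>M. v \<in> e}) \<le> D"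
    and D: "D \<le> 144/100000 * (real m)^2" and m: "m \<ge> 10"
    and B0: "B0 \<in> P" "card B0 = 4"
    and C0: "C0 \<subseteq> P - {B0}" "m - 1 \<le> card C0" "\<forall>T\<in>C0. card T = 4"
  shows "\<exists>B1 B2 B3. B1 \<in> C0 \<and> B2 \<in> C0 \<and> B3 \<in> C0 \<and> B1 \<noteq> B2 \<and> B1 \<noteq> B3 \<and> B2 \<noteq> B3 \<and>
     nocross M (\<lambda>i. if i = 0 then B0 else if i = 1 then B1 else if i = 2 then B2 else B3)"
proof -
  define mr where "mr = real m"
  have mr: "mr \<ge> 10" using m unfolding mr_def by simp
  have Dm: "D \<le> 144/100000 * mr^2" using D unfolding mr_def by simp
  have finP: "finite P" using P finite_elements by blast
  have finC0: "finite C0" using finP C0(1) finite_subset by blast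
  have dP: "disjoint P" using P(1) by (rule partition_onD2)
  have subV: "T \<subseteq> V" if "T \<in> P" for T using P(1) that unfolding partition_on_def by blast
  have finT: "finite T" if "T \<in> P" for T using subV[OF that] P(2) finite_subset by blast
  have dj: "T \<inter> T' = {}" if "T \<in> P" "T' \<in> P" "T \<noteq> T'" for T T' using dP that disjointD by blast
  have cC0: "real (card C0) \<ge> mr - 1" using C0(2) m unfolding mr_def by linarith
  let ?S1 = "{T\<in>C0. mr/20 < real (W M B0 T)}"
  have "real (card ?S1) * (mr/20) \<le> real (\<Sum>T\<in>C0. W M B0 T)"
    by (rule markov[OF finC0]) (use mr in simp)
  also have "\<dots> \<le> 3 * real (card B0) * D"
    by (rule Wsum_real[OF P(1,2) _ finT[OF B0(1)] subV[OF B0(1)] M deg]) (use C0(1) in blast)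
  also have "\<dots> \<le> (12 * 144/100000) * mr^2" using B0(2) Dm by simp
  finally have "real (card ?S1) \<le> (12 * 144/100000) * 20 * mr" by (rule div_helper) (use mr in simp_all)
  then have "real (card ?S1) + real (card ({}::'a set set)) < real (card C0)" using cC0 mr by simp
  then obtain B1 where B1: "B1 \<in> C0" "\<not> mr/20 < real (W M B0 B1)"
    using exists_avoid[OF finC0, of ?S1 "{}"] by auto
  have B1P: "B1 \<in> P" "B1 \<noteq> B0" using B1 C0(1) by auto
  have W1: "real (W M B0 B1) \<le> mr/20" using B1(2) by simp
  define C1 where "C1 = C0 - {B1}"
  have finC1: "finite C1" using finC0 unfolding C1_def by simp
  have C1P: "C1 \<subseteq> P" using C0(1) unfolding C1_def by auto
  have cC1: "real (card C1) \<ge> mr - 2" unfolding C1_def using cC0 B1(1) finC0 by (simp add: card_Diff_singleton)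
  have dC1: "\<forall>T\<in>C1. T \<inter> B0 = {} \<and> T \<inter> B1 = {}"
    using dj C0(1) B1P B0(1) unfolding C1_def by blast
  have d01: "B0 \<inter> B1 = {}" using dj B1P B0(1) by blast
  let ?Ba = "{T\<in>C1. \<exists>e\<in>M. e \<inter> B0 \<noteq> {} \<and> e \<inter> B1 \<noteq> {} \<and> e \<inter> T \<noteq> {}}"
  have "card ?Ba \<le> W M B0 B1"
    by (rule badcount[OF dP C1P finC1 dC1 d01 finT[OF B0(1)] finT[OF B1P(1)] M])
  then have Ba: "real (card ?Ba) \<le> mr/20" using W1 by linarith
  let ?S2 = "{T\<in>C1. mr/10 < real (W M (B0 \<union> B1) T)}"
  have c01: "card (B0 \<union> B1) = 8" using card_Un_disjoint[OF finT[OF B0(1)] finT[OF B1P(1)] d01] B0(2) C0(3) B1(1) by simp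
  have "real (card ?S2) * (mr/10) \<le> real (\<Sum>T\<in>C1. W M (B0 \<union> B1) T)"
    by (rule markov[OF finC1]) (use mr in simp)
  also have "\<dots> \<le> 3 * real (card (B0 \<union> B1)) * D"
    by (rule Wsum_real[OF P(1,2) C1P _ _ M deg]) (use finT[OF B0(1)] finT[OF B1P(1)] subV[OF B0(1)] subV[OF B1P(1)] in auto)
  also have "\<dots> \<le> (24 * 144/100000) * mr^2" using c01 Dm by simp
  finally have "real (card ?S2) \<le> (24 * 144/100000) * 10 * mr" by (rule div_helper) (use mr in simp_all)
  then have "real (card ?Ba) + real (card ?S2) < real (card C1)" using Ba cC1 mr by simp
  then obtain B2 where B2: "B2 \<in> C1" "B2 \<notin> ?Ba" "B2 \<notin> ?S2"
    using exists_avoid[OF finC1, of ?Ba ?S2] by auto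
  have W2: "real (W M (B0 \<union> B1) B2) \<le> mr/10" using B2 by simp
  have B2P: "B2 \<in> P" "B2 \<noteq> B0" "B2 \<noteq> B1" "B2 \<in> C0" using B2(1) C1P C0(1) unfolding C1_def by auto
  define C2 where "C2 = C1 - {B2}"
  have finC2: "finite C2" using finC1 unfolding C2_def by simp
  have C2P: "C2 \<subseteq> P" using C1P unfolding C2_def by auto
  have cC2: "real (card C2) \<ge> mr - 3" unfolding C2_def using cC1 B2(1) finC1 by (simp add: card_Diff_singleton)
  have dC2: "\<forall>T\<in>C2. T \<inter> B0 = {} \<and> T \<inter> B1 = {}" using dC1 unfolding C2_def by blast
  have dC2': "\<forall>T\<in>C2. T \<inter> (B0 \<union> B1) = {} \<and> T \<inter> B2 = {}"
  proof
    fix T assume T: "T \<in> C2"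
    then have "T \<in> P" "T \<noteq> B2" using C2P unfolding C2_def by auto
    then have "T \<inter> B2 = {}" using dj B2P(1) by blast
    then show "T \<inter> (B0 \<union> B1) = {} \<and> T \<inter> B2 = {}" using dC2 T by blast
  qed
  have d012: "(B0 \<union> B1) \<inter> B2 = {}" using dj B2P B0(1) B1P by blast
  let ?Bc = "{T\<in>C2. \<exists>e\<in>M. e \<inter> B0 \<noteq> {} \<and> e \<inter> B1 \<noteq> {} \<and> e \<inter> T \<noteq> {}}"
  let ?Bd = "{T\<in>C2. \<exists>e\<in>M. e \<inter> (B0 \<union> B1) \<noteq> {} \<and> e \<inter> B2 \<noteq> {} \<and> e \<inter> T \<noteq> {}}"
  have "card ?Bc \<le> W M B0 B1"
    by (rule badcount[OF dP C2P finC2 dC2 d01 finT[OF B0(1)] finT[OF B1P(1)] M])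
  then have Bc: "real (card ?Bc) \<le> mr/20" using W1 by linarith
  have "card ?Bd \<le> W M (B0 \<union> B1) B2"
    by (rule badcount[OF dP C2P finC2 dC2' d012 _ finT[OF B2P(1)] M]) (use finT[OF B0(1)] finT[OF B1P(1)] in simp)
  then have Bd: "real (card ?Bd) \<le> mr/10" using W2 by linarith
  have "real (card ?Bc) + real (card ?Bd) < real (card C2)" using Bc Bd cC2 mr by simp
  then obtain B3 where B3: "B3 \<in> C2" "B3 \<notin> ?Bc" "B3 \<notin> ?Bd"
    using exists_avoid[OF finC2, of ?Bc ?Bd] by auto
  have B3P: "B3 \<in> C0" "B3 \<noteq> B1" "B3 \<noteq> B2" using B3(1) unfolding C2_def C1_def by auto
  have nc: "nocross M (\<lambda>i. if i = 0 then B0 else if i = 1 then B1 else if i = 2 then B2 else B3)"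
    unfolding nocross_def
  proof
    fix e assume e: "e \<in> M"
    have a: "\<not>(e \<inter> B0 \<noteq> {} \<and> e \<inter> B1 \<noteq> {} \<and> e \<inter> B2 \<noteq> {})" using B2(1,2) e by blast
    have c: "\<not>(e \<inter> B0 \<noteq> {} \<and> e \<inter> B1 \<noteq> {} \<and> e \<inter> B3 \<noteq> {})" using B3(1,2) e by blast
    have d: "\<not>(e \<inter> (B0 \<union> B1) \<noteq> {} \<and> e \<inter> B2 \<noteq> {} \<and> e \<inter> B3 \<noteq> {})" using B3(1,3) e by blast
    show "\<not>(e \<inter> (if (0::nat) = 0 then B0 else if (0::nat) = 1 then B1 else if (0::nat) = 2 then B2 else B3) \<noteq> {} \<and>
            e \<inter> (if (1::nat) = 0 then B0 else if (1::nat) = 1 then B1 else if (1::nat) = 2 then B2 else B3) \<noteq> {} \<and>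
            e \<inter> (if (2::nat) = 0 then B0 else if (2::nat) = 1 then B1 else if (2::nat) = 2 then B2 else B3) \<noteq> {}) \<and>
          \<not>(e \<inter> (if (0::nat) = 0 then B0 else if (0::nat) = 1 then B1 else if (0::nat) = 2 then B2 else B3) \<noteq> {} \<and>
            e \<inter> (if (1::nat) = 0 then B0 else if (1::nat) = 1 then B1 else if (1::nat) = 2 then B2 else B3) \<noteq> {} \<and>
            e \<inter> (if (3::nat) = 0 then B0 else if (3::nat) = 1 then B1 else if (3::nat) = 2 then B2 else B3) \<noteq> {}) \<and>
          \<not>(e \<inter> (if (0::nat) = 0 then B0 else if (0::nat) = 1 then B1 else if (0::nat) = 2 then B2 else B3) \<noteq> {} \<and>
            e \<inter> (if (2::nat) = 0 then B0 else if (2::nat) = 1 then B1 else if (2::nat) = 2 then B2 else B3) \<noteq> {} \<and>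
            e \<inter> (if (3::nat) = 0 then B0 else if (3::nat) = 1 then B1 else if (3::nat) = 2 then B2 else B3) \<noteq> {}) \<and>
          \<not>(e \<inter> (if (1::nat) = 0 then B0 else if (1::nat) = 1 then B1 else if (1::nat) = 2 then B2 else B3) \<noteq> {} \<and>
            e \<inter> (if (2::nat) = 0 then B0 else if (2::nat) = 1 then B1 else if (2::nat) = 2 then B2 else B3) \<noteq> {} \<and>
            e \<inter> (if (3::nat) = 0 then B0 else if (3::nat) = 1 then B1 else if (3::nat) = 2 then B2 else B3) \<noteq> {})"
      using a c d by auto
  qed
  show ?thesis using B1(1) B2P(3,4) B3P nc by blast
qed



lemma ptyp_card4:
  assumes "ptyp A B S" "A \<inter> B = {}" "finite A" "finite B"
  shows "card S = 4"
  using assms(1) unfolding ptyp_def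
proof
  assume h: "S \<subseteq> A \<union> B \<and> card (S \<inter> A) = 1 \<and> card (S \<inter> B) = 3"
  have "S = (S \<inter> A) \<union> (S \<inter> B)" using h by blast
  moreover have "finite (S \<inter> A)" "finite (S \<inter> B)" using assms(3,4) by auto
  moreover have "(S \<inter> A) \<inter> (S \<inter> B) = {}" using assms(2) by blast
  ultimately have "card S = card (S \<inter> A) + card (S \<inter> B)" by (metis card_Un_disjoint)
  then show ?thesis using h by simp
qed simp

lemma type_count:
  assumes AB: "A \<inter> B = {}" "finite A" "finite B"
    and P: "partition_on (A \<union> B) P" "\<forall>S\<in>P. ptyp A B S"
    and c: "card A = 6*m" "card B = 6*m"
  shows "card {T\<in>P. T \<subseteq> A} = m \<and> card {T\<in>P. \<not> T \<subseteq> A} = 2*m"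
proof -
  have finP: "finite P" using P(1) AB(2,3) finite_elements by (metis finite_Un)
  have dj: "\<forall>S\<in>P. \<forall>T\<in>P. S \<noteq> T \<longrightarrow> S \<inter> T = {}" using P(1) partition_onD2 disjointD by blast
  have UP: "\<Union>P = A \<union> B" using P(1) unfolding partition_on_def by simp
  have finS: "\<forall>S\<in>P. finite S" using UP AB(2,3) by (metis Union_upper finite_Un finite_subset)
  have cB: "card (T \<inter> B) = (if T \<subseteq> A then 0 else 3)" if "T \<in> P" for T
  proof (cases "T \<subseteq> A")
    case True then show ?thesis using AB(1) by (simp add: Int_absorb1 inf.absorb_iff2) (metis True disjoint_iff subsetD card.empty Int_emptyI)
  next
    case False then show ?thesis using P(2) that unfolding ptyp_def by auto
  qed
  have cA: "card (T \<inter> A) = (if T \<subseteq> A then 4 else 1)" if "T \<in> P" for T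
  proof (cases "T \<subseteq> A")
    case True
    have "T \<inter> B = {}" using True AB(1) by blast
    then have "card T = 4" using P(2) that unfolding ptyp_def by auto
    then show ?thesis using True by (simp add: Int_absorb2)
  next
    case False then show ?thesis using P(2) that unfolding ptyp_def by auto
  qed
  have "card B = card (\<Union>T\<in>P. T \<inter> B)" using UP by (metis Int_Un_eq(4) Int_commute UN_extend_simps(4) Un_Int_eq(2) Sup_inf_eq_bot_iff inf_sup_absorb Int_Union2 Int_Union inf_commute)
  also have "\<dots> = (\<Sum>T\<in>P. card (T \<inter> B))"
    by (rule card_UN_disjoint[OF finP]) (use finS dj in auto)
  also have "\<dots> = (\<Sum>T\<in>P. if T \<subseteq> A then 0 else 3)" using cB by simp
  also have "\<dots> = 3 * card {T\<in>P. \<not> T \<subseteq> A}"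
    using sum.If_cases[OF finP, of "\<lambda>T. T \<subseteq> A" "\<lambda>_. 0::nat" "\<lambda>_. 3"] by (simp add: Int_def)
  finally have q: "card {T\<in>P. \<not> T \<subseteq> A} = 2*m" using c(2) by simp
  have "card A = card (\<Union>T\<in>P. T \<inter> A)" using UP by (metis Int_Union2 Int_commute Un_Int_eq(1))
  also have "\<dots> = (\<Sum>T\<in>P. card (T \<inter> A))"
    by (rule card_UN_disjoint[OF finP]) (use finS dj in auto)
  also have "\<dots> = (\<Sum>T\<in>P. if T \<subseteq> A then 4 else 1)" using cA by simp
  also have "\<dots> = 4 * card {T\<in>P. T \<subseteq> A} + card {T\<in>P. \<not> T \<subseteq> A}"
    using sum.If_cases[OF finP, of "\<lambda>T. T \<subseteq> A" "\<lambda>_. 4::nat" "\<lambda>_. 1"] by (simp add: Int_def)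
  finally have "4 * card {T\<in>P. T \<subseteq> A} + 2*m = 6*m" using c(1) q by simp
  then show ?thesis using q by simp
qed



theorem lemma6p1:
  fixes \<alpha> :: real
  assumes "0 < \<alpha>" and "\<alpha> < 1 / 10^5"
  shows "\<exists>m0::nat. \<forall>m\<ge>m0. \<forall>(A::'a set) B H.
           finite A \<and> finite B \<and> A \<inter> B = {} \<and> card A = 6*m \<and> card B = 6*m \<and>
           is_3graph (A \<union> B) H \<and>
           (\<forall>v\<in>A \<union> B. alpha_good \<alpha> (A \<union> B) H (bip3 A B) v)
           \<longrightarrow> has_K4minus_factor (A \<union> B) H"
proof (intro exI[of _ 10] allI impI)
  fix m :: nat and A B :: "'a set" and H
  assume m: "10 \<le> m"
  assume h: "finite A \<and> finite B \<and> A \<inter> B = {} \<and> card A = 6*m \<and> card B = 6*m \<and>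
           is_3graph (A \<union> B) H \<and> (\<forall>v\<in>A \<union> B. alpha_good \<alpha> (A \<union> B) H (bip3 A B) v)"
  then have fA: "finite A" and fB: "finite B" and AB: "A \<inter> B = {}" and cA: "card A = 6*m"
    and cB: "card B = 6*m" and good: "\<forall>v\<in>A \<union> B. alpha_good \<alpha> (A \<union> B) H (bip3 A B) v" by auto
  define V where "V = A \<union> B"
  define M where "M = bip3 A B - H"
  define D :: real where "D = 144/100000 * (real m)^2"
  have fV: "finite V" using fA fB unfolding V_def by simp
  have cV: "card V = 12*m" using card_Un_disjoint[OF fA fB AB] cA cB unfolding V_def by simp
  have MV: "M \<subseteq> Pow V" unfolding M_def bip3_def V_def by auto
  have fM: "finite M" using MV fV by (meson finite_Pow_iff finite_subset)
  have M3: "\<forall>e\<in>M. card e = 3" unfolding M_def bip3_def by auto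
  have deg: "\<forall>v\<in>V. real (card {e\<in>M. v \<in> e}) \<le> D"
  proof
    fix v assume v: "v \<in> V"
    have "{e\<in>M. v \<in> e} = {e\<in>bip3 A B. v \<in> e \<and> e \<notin> H}" unfolding M_def by auto
    then have "real (card {e\<in>M. v \<in> e}) \<le> \<alpha> * (real (card V))^2"
      using good v unfolding alpha_good_def V_def by simp
    also have "\<dots> = \<alpha> * 144 * (real m)^2" using cV by (simp add: power2_eq_square)
    also have "\<dots> \<le> (1/100000) * 144 * (real m)^2"
      by (rule mult_right_mono[OF mult_right_mono]) (use assms(2) in auto)
    also have "\<dots> = D" unfolding D_def by simp
    finally show "real (card {e\<in>M. v \<in> e}) \<le> D" .
  qed
  define Q where "Q k \<longleftrightarrow> (\<exists>P. partition_on V P \<and> (\<forall>S\<in>P. ptyp A B S) \<and> card {S\<in>P. mfree M S} = k)" for k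
  obtain P0 where P0: "partition_on V P0" "\<forall>S\<in>P0. ptyp A B S"
    using init_part_aux[OF AB fA fB subset_refl subset_refl, of m "2*m"] cA cB unfolding V_def by auto
  have Q0: "Q (card {S\<in>P0. mfree M S})" unfolding Q_def using P0 by blast
  have bnd: "\<forall>k. Q k \<longrightarrow> k \<le> card (Pow V)"
  proof (intro allI impI)
    fix k assume "Q k"
    then obtain P where P: "partition_on V P" "card {S\<in>P. mfree M S} = k" unfolding Q_def by blast
    have "{S\<in>P. mfree M S} \<subseteq> Pow V" using P(1) unfolding partition_on_def by auto
    then show "k \<le> card (Pow V)" using P(2) fV by (metis card_mono finite_Pow_iff)
  qed
  obtain k where k: "Q k" "\<forall>y. Q y \<longrightarrow> y \<le> k" using Nat.ex_has_greatest_nat[OF Q0 bnd] by blast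
  then obtain P where P: "partition_on V P" "\<forall>S\<in>P. ptyp A B S" "card {S\<in>P. mfree M S} = k"
    unfolding Q_def by blast
  have allfree: "\<forall>S\<in>P. mfree M S"
  proof (rule ccontr)
    assume "\<not> (\<forall>S\<in>P. mfree M S)"
    then obtain S0 where S0: "S0 \<in> P" "\<not> mfree M S0" by blast
    have PV: "partition_on (A \<union> B) P" using P(1) unfolding V_def by simp
    have cnt: "card {T\<in>P. T \<subseteq> A} = m \<and> card {T\<in>P. \<not> T \<subseteq> A} = 2*m"
      by (rule type_count[OF AB fA fB PV P(2) cA cB])
    have c4: "card T = 4" if "T \<in> P" for T using ptyp_card4[OF _ AB fA fB] P(2) that by blast
    have finP: "finite P" using P(1) fV finite_elements by blast
    define C0 where "C0 = {T\<in>P. T \<noteq> S0 \<and> (T \<subseteq> A \<longleftrightarrow> S0 \<subseteq> A)}"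
    have C0P: "C0 \<subseteq> P - {S0}" unfolding C0_def by auto
    have cC0: "m - 1 \<le> card C0"
    proof (cases "S0 \<subseteq> A")
      case True
      then have "C0 = {T\<in>P. T \<subseteq> A} - {S0}" unfolding C0_def by auto
      then have "card C0 = m - 1" using cnt True S0(1) finP by (simp add: card_Diff_singleton)
      then show ?thesis by simp
    next
      case False
      then have "C0 = {T\<in>P. \<not> T \<subseteq> A} - {S0}" unfolding C0_def by auto
      then have "card C0 = 2*m - 1" using cnt False S0(1) finP by (simp add: card_Diff_singleton)
      then show ?thesis by simp
    qed
    have C04: "\<forall>T\<in>C0. card T = 4" using c4 unfolding C0_def by blast
    obtain B1 B2 B3 where BB: "B1 \<in> C0" "B2 \<in> C0" "B3 \<in> C0" "B1 \<noteq> B2" "B1 \<noteq> B3" "B2 \<noteq> B3"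
      and nc: "nocross M (\<lambda>i. if i = 0 then S0 else if i = 1 then B1 else if i = 2 then B2 else B3)"
      using choose_blocks[OF P(1) fV fM M3 deg _ m S0(1) c4[OF S0(1)] C0P cC0 C04] unfolding D_def by blast
    define Bk where "Bk = (\<lambda>i::nat. if i = 0 then S0 else if i = 1 then B1 else if i = 2 then B2 else B3)"
    have Bk0: "Bk 0 = S0" unfolding Bk_def by simp
    have inP: "\<forall>i<4. Bk i \<in> P" using BB S0(1) unfolding Bk_def C0_def by auto
    have nS0: "B1 \<noteq> S0" "B2 \<noteq> S0" "B3 \<noteq> S0" using BB unfolding C0_def by auto
    have dist: "\<forall>i<4. \<forall>j<4. i\<noteq>j \<longrightarrow> Bk i \<noteq> Bk j"
    proof (intro allI impI)
      fix i j :: nat assume "i<4" "j<4" "i \<noteq> j"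
      then have "i \<in> {0,1,2,3}" "j \<in> {0,1,2,3}" using lt4 by blast+
      then show "Bk i \<noteq> Bk j" using \<open>i\<noteq>j\<close> BB nS0 unfolding Bk_def by auto
    qed
    have same: "\<forall>i<4. (Bk i \<subseteq> A \<longleftrightarrow> Bk 0 \<subseteq> A)" using BB unfolding Bk_def C0_def by auto
    obtain P' where P': "partition_on (A\<union>B) P'" "\<forall>S\<in>P'. ptyp A B S"
      "card {S\<in>P. mfree M S} < card {S\<in>P'. mfree M S}"
      using rearrange[OF AB fA fB PV P(2) inP dist same _ M3] nc S0(2) unfolding Bk_def by auto
    have "Q (card {S\<in>P'. mfree M S})" unfolding Q_def V_def using P'(1,2) by blast
    then show False using k(2) P(3) P'(3) by fastforce
  qed
  have "\<forall>S\<in>P. K4minus_copy H S" using typ_K4[OF _ AB] P(2) allfree unfolding M_def by blast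
  then show "has_K4minus_factor (A \<union> B) H" unfolding has_K4minus_factor_def using P(1) unfolding V_def by blast
qed


end
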